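(* Let $A_1,A_2,A_3,A_4$ be four points in $\mathbb{R}^3$, and write $d_{ij}=|A_iA_j|$ and $\overrightarrow{d}_{ij}=\overrightarrow{A_iA_j}$. Consider the Cayley–Menger determinant $$D=\begin{vmatrix} 0&1&1&1&1\\ 1&0&d_{12}^2&d_{13}^2&d_{14}^2\\ 1&d_{12}^2&0&d_{23}^2&d_{24}^2\\ 1&d_{13}^2&d_{23}^2&0&d_{34}^2\\ 1&d_{14}^2&d_{24}^2&d_{34}^2&0\end{vmatrix}$$ as a polynomial in the six independent variables $d_{12}^2,d_{13}^2,d_{14}^2,d_{23}^2,d_{24}^2,d_{34}^2$. Then: (1) $\displaystyle \frac12\frac{\partial D}{\partial d_{13}^2}=-16\,\langle \overrightarrow{S}_{124},\overrightarrow{S}_{234}\rangle$, where $\overrightarrow{S}_{ijk}=\frac12\,\overrightarrow{d}_{ij}\times\overrightarrow{d}_{jk}$ and $\langle\cdot,\cdot\rangle$ is the standard scalar product of $\mathbb{R}^3$ (the partial derivative being evaluated at the actual squared distances of the four points). (2) If the four points are coplanar, then $\displaystyle \frac12\frac{\partial D}{\partial d_{13}^2}=-16\,S_{124}\,S_{234}$, where $S_{ijk}$ denotes the oriented area of the triangle $A_iA_jA_k$ in that plane (with respect to a fixed orientation of the plane).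
   Context: $\times$ is the cross product in $\mathbb{R}^3$. Oriented area: $S_{ijk}$ is the signed area of triangle $A_iA_jA_k$, so that e.g. $S_{ijk}=-S_{ikj}$ and $|S_{ijk}|=|\overrightarrow{S}_{ijk}|$. *)

theory Defs
  imports "HOL-Analysis.Analysis"
begin

definition cm_matrix :: "real \<Rightarrow> real \<Rightarrow> real \<Rightarrow> real \<Rightarrow> real \<Rightarrow> real \<Rightarrow> real^5^5" where
  "cm_matrix x12 x13 x14 x23 x24 x34 =
     vector [vector [0, 1, 1, 1, 1],
             vector [1, 0, x12, x13, x14],
             vector [1, x12, 0, x23, x24],
             vector [1, x13, x23, 0, x34],
             vector [1, x14, x24, x34, 0]]"

definition cayley_menger :: "real \<Rightarrow> real \<Rightarrow> real \<Rightarrow> real \<Rightarrow> real \<Rightarrow> real \<Rightarrow> real" where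
  "cayley_menger x12 x13 x14 x23 x24 x34 = det (cm_matrix x12 x13 x14 x23 x24 x34)"

definition vec_area :: "real^3 \<Rightarrow> real^3 \<Rightarrow> real^3 \<Rightarrow> real^3" where
  "vec_area Ai Aj Ak = (1/2) *\<^sub>R (cross3 (Aj - Ai) (Ak - Aj))"

text \<open>Oriented area of triangle with vertices P Q R of a plane, expressed in
  planar coordinates w.r.t. an ordered orthonormal frame (u,v) of the plane
  (the frame fixes the orientation).\<close>

definition oriented_area :: "real^3 \<Rightarrow> real^3 \<Rightarrow> real^3 \<Rightarrow> real^3 \<Rightarrow> real^3 \<Rightarrow> real" where
  "oriented_area u v P Q R =
     (1/2) * (((Q - P) \<bullet> u) * ((R - P) \<bullet> v) - ((R - P) \<bullet> u) * ((Q - P) \<bullet> v))"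

end

theory Submission
  imports Defs
begin

lemma exhaust_5:
  fixes x :: 5
  shows "x = 1 \<or> x = 2 \<or> x = 3 \<or> x = 4 \<or> x = 5"
proof (induct x)
  case (of_int z)
  then have "z = 0 \<or> z = 1 \<or> z = 2 \<or> z = 3 \<or> z = 4" by fastforce
  then show ?case by auto
qed
lemma UNIV_5: "UNIV = {1, 2, 3, 4, 5::5}"
  using exhaust_5 by auto
lemma vector_5 [simp]:
 "(vector [a,b,c,d,e] ::('a::zero)^5)$1 = a"
 "(vector [a,b,c,d,e] ::('a::zero)^5)$2 = b"
 "(vector [a,b,c,d,e] ::('a::zero)^5)$3 = c"
 "(vector [a,b,c,d,e] ::('a::zero)^5)$4 = d"
 "(vector [a,b,c,d,e] ::('a::zero)^5)$5 = e"
  unfolding vector_def by simp_all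
lemma cm_poly: "cayley_menger x12 x13 x14 x23 x24 x34 = (-2)*x23*x24*x34 + (2)*x14*x23*x34 + (2)*x14*x23*x24 + (-2)*x14*x23^2 + (-2)*x14^2*x23 + (2)*x13*x24*x34 + (-2)*x13*x24^2 + (2)*x13*x23*x24 + (-2)*x13*x14*x34 + (2)*x13*x14*x24 + (2)*x13*x14*x23 + (-2)*x13^2*x24 + (-2)*x12*x34^2 + (2)*x12*x24*x34 + (2)*x12*x23*x34 + (2)*x12*x14*x34 + (-2)*x12*x14*x24 + (2)*x12*x14*x23 + (2)*x12*x13*x34 + (2)*x12*x13*x24 + (-2)*x12*x13*x23 + (-2)*x12^2*x34"
proof -
  have f1: "finite {2::5, 3, 4, 5}" "1 \<notin> {2::5, 3, 4, 5}" by auto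
  have f2: "finite {3::5, 4, 5}" "2 \<notin> {3::5, 4, 5}" by auto
  have f3: "finite {4::5, 5}" "3 \<notin> {4::5, 5}" by auto
  have f4: "finite {5::5}" "4 \<notin> {5::5}" by auto
  show ?thesis
    unfolding cayley_menger_def det_def UNIV_5
    unfolding sum_over_permutations_insert[OF f1]
    unfolding sum_over_permutations_insert[OF f2]
    unfolding sum_over_permutations_insert[OF f3]
    unfolding sum_over_permutations_insert[OF f4]
    unfolding permutes_sing
    by (simp add: cm_matrix_def sign_swap_id permutation_swap_id sign_compose permutation_compose sign_id swap_id_eq algebra_simps power2_eq_square)
qed
definition cmd :: "real \<Rightarrow> real \<Rightarrow> real \<Rightarrow> real \<Rightarrow> real \<Rightarrow> real \<Rightarrow> real" where
 "cmd x12 x13 x14 x23 x24 x34 = 2*x24*x34 - 2*x24^2 + 2*x23*x24 - 2*x14*x34 + 2*x14*x24 + 2*x14*x23 - 4*x13*x24 + 2*x12*x34 + 2*x12*x24 - 2*x12*x23"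

lemma cm_deriv: "((\<lambda>t. cayley_menger x12 t x14 x23 x24 x34) has_real_derivative cmd x12 x13 x14 x23 x24 x34) (at x13)"
  unfolding cm_poly cmd_def
  by (auto intro!: derivative_eq_intros simp: algebra_simps power2_eq_square)

lemma inner3: "(x::real^3) \<bullet> y = x$1*y$1 + x$2*y$2 + x$3*y$3"
  by (simp add: inner_vec_def sum_3)

lemma cross3c: "cross3 x y $ 1 = x$2*y$3 - x$3*y$2" "cross3 x y $ 2 = x$3*y$1 - x$1*y$3" "cross3 x y $ 3 = x$1*y$2 - x$2*y$1"
  by (simp_all add: cross3_def)

lemma lagrange: "(cross3 x y) \<bullet> (cross3 z w) = (x\<bullet>z)*(y\<bullet>w) - (x\<bullet>w)*(y\<bullet>z)"
  by (simp add: inner3 cross3c algebra_simps)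

lemma part1: "cmd ((dist A1 A2)\<^sup>2) ((dist A1 A3)\<^sup>2) ((dist A1 A4)\<^sup>2) ((dist A2 A3)\<^sup>2) ((dist A2 A4)\<^sup>2) ((dist A3 A4)\<^sup>2)
   = 2 * (- 16 * (vec_area A1 A2 A4 \<bullet> vec_area A2 A3 A4))"
proof -
  define a where "a = A2 - A1"
  define b where "b = A3 - A1"
  define c where "c = A4 - A1"
  have e: "A2 = A1 + a" "A3 = A1 + b" "A4 = A1 + c" by (simp_all add: a_def b_def c_def)
  have d: "\<And>x y::real^3. (dist x y)^2 = (x - y) \<bullet> (x - y)"
    by (simp add: dist_norm power2_norm_eq_inner)
  have va: "vec_area A1 A2 A4 \<bullet> vec_area A2 A3 A4 = (1/4) * ((cross3 a (c - a)) \<bullet> (cross3 (b - a) (c - b)))"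
    unfolding vec_area_def e by simp
  show ?thesis
    unfolding va unfolding lagrange d cmd_def unfolding e
    by (simp add: inner_diff_left inner_diff_right inner_commute algebra_simps power2_eq_square)
qed

lemma span2: assumes "(x::real^3) \<in> span {u, v}" obtains p q where "x = p *\<^sub>R u + q *\<^sub>R v"
proof -
  obtain k ka where "x - k *\<^sub>R u = ka *\<^sub>R v" using assms by (auto simp: span_insert span_singleton)
  then have "x = k *\<^sub>R u + ka *\<^sub>R v" by (metis add.commute diff_add_cancel)
  then show ?thesis using that by blast
qed

lemma part2:
  assumes uu: "u \<bullet> u = 1" and vv: "v \<bullet> v = 1" and uv: "u \<bullet> v = 0"
    and h: "\<forall>P\<in>{A1, A2, A3, A4}. P - A1 \<in> span {u, v}"
  shows "vec_area A1 A2 A4 \<bullet> vec_area A2 A3 A4 = oriented_area u v A1 A2 A4 * oriented_area u v A2 A3 A4"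
proof -
  have vu: "v \<bullet> u = 0" using uv by (simp add: inner_commute)
  obtain p1 q1 where a: "A2 - A1 = p1 *\<^sub>R u + q1 *\<^sub>R v" using h span2 by (metis insertCI)
  obtain p2 q2 where b: "A3 - A1 = p2 *\<^sub>R u + q2 *\<^sub>R v" using h span2 by (metis insertCI)
  obtain p3 q3 where c: "A4 - A1 = p3 *\<^sub>R u + q3 *\<^sub>R v" using h span2 by (metis insertCI)
  have e: "A2 = A1 + (p1 *\<^sub>R u + q1 *\<^sub>R v)" "A3 = A1 + (p2 *\<^sub>R u + q2 *\<^sub>R v)" "A4 = A1 + (p3 *\<^sub>R u + q3 *\<^sub>R v)"
    using a b c by (simp_all add: algebra_simps)
  show ?thesis
    unfolding vec_area_def oriented_area_def e
    by (simp add: lagrange inner_diff_left inner_diff_right inner_add_left inner_add_right uu vv uv vu algebra_simps)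
qed

theorem theorem1:
  fixes A1 A2 A3 A4 :: "real^3"
  defines "d12 \<equiv> (dist A1 A2)\<^sup>2" and "d13 \<equiv> (dist A1 A3)\<^sup>2"
      and "d14 \<equiv> (dist A1 A4)\<^sup>2" and "d23 \<equiv> (dist A2 A3)\<^sup>2"
      and "d24 \<equiv> (dist A2 A4)\<^sup>2" and "d34 \<equiv> (dist A3 A4)\<^sup>2"
  shows "((\<lambda>t. cayley_menger d12 t d14 d23 d24 d34) has_real_derivative
            2 * (- 16 * (vec_area A1 A2 A4 \<bullet> vec_area A2 A3 A4))) (at d13)
       \<and> (coplanar {A1, A2, A3, A4} \<longrightarrow>
          (\<forall>u v. u \<bullet> u = 1 \<and> v \<bullet> v = 1 \<and> u \<bullet> v = 0 \<and>
                 (\<forall>P\<in>{A1, A2, A3, A4}. P - A1 \<in> span {u, v}) \<longrightarrow>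
            ((\<lambda>t. cayley_menger d12 t d14 d23 d24 d34) has_real_derivative
               2 * (- 16 * oriented_area u v A1 A2 A4 * oriented_area u v A2 A3 A4)) (at d13)))"
  proof -
  have D: "((\<lambda>t. cayley_menger d12 t d14 d23 d24 d34) has_real_derivative
            2 * (- 16 * (vec_area A1 A2 A4 \<bullet> vec_area A2 A3 A4))) (at d13)"
    using cm_deriv[of d12 d14 d23 d24 d34 d13] part1[of A1 A2 A3 A4]
    unfolding d12_def d13_def d14_def d23_def d24_def d34_def by simp
  show ?thesis
  proof (intro conjI impI allI)
    fix u v assume H: "u \<bullet> u = 1 \<and> v \<bullet> v = 1 \<and> u \<bullet> v = 0 \<and>
                 (\<forall>P\<in>{A1, A2, A3, A4}. P - A1 \<in> span {u, v})"
    then show "((\<lambda>t. cayley_menger d12 t d14 d23 d24 d34) has_real_derivative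
               2 * (- 16 * oriented_area u v A1 A2 A4 * oriented_area u v A2 A3 A4)) (at d13)"
      using D part2[of u v A1 A2 A3 A4] by simp
  qed (rule D)
qed

end
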